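(* Let $x,v$ be positive integers with $xv\ge3$, and let $\lambda=(x,x,\dots,x)$ consist of $v$ copies of $x$ (so $n=vx$). Then $P(\lambda)\setminus\{0\}$ is isomorphic to the poset whose elements are \[ \{(r,p)\in\mathbb{Z}^2:0\le r<x,\ 0\le p<v\}\setminus\{(0,0),(x-1,v-1)\}, \] with strict order relation $(r,p)\prec(r',p')$ if and only if both $p>p'$ and $r'>r$.
   Context: For a vector $\lambda=(\lambda_1,\dots,\lambda_d)$ of positive integers with sum $n\ge2$, $\Delta_\lambda=\mathrm{conv}(e_1,\dots,e_d,\lambda)\subset\mathbb{R}^d$ has fundamental parallelepiped $\Pi_\lambda=\{\sum_{i=1}^d\gamma_i(1,e_i)+\gamma_{d+1}(1,\lambda):0\le\gamma_i<1\}\subset\mathbb{R}^{d+1}$. $P(\lambda)$ is $\Pi_\lambda\cap\mathbb{Z}^{d+1}$ ordered by $\sigma\preceq\mu$ iff $\mu-\sigma\in\Pi_\lambda\cap\mathbb{Z}^{d+1}$; the origin $0$ is its minimum. *)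

theory Defs
  imports Complex_Main
begin

text \<open>Points of Z^(d+1) are encoded as functions nat => int, with coordinates
  indexed 0..d and value 0 outside {0..d}.  The vector lambda = (lambda_1,...,lambda_d)
  is a function nat => int, only its values at 1..d matter.
  The generators of the parallelepiped are (1,e_i) for i = 1..d and (1,lambda);
  coordinate 0 is the leading "1" coordinate.\<close>

definition in_Pi :: "nat \<Rightarrow> (nat \<Rightarrow> int) \<Rightarrow> (nat \<Rightarrow> int) \<Rightarrow> bool" where
  "in_Pi d lam z \<longleftrightarrow>
     (\<forall>j>d. z j = 0) \<and>
     (\<exists>\<gamma>::nat \<Rightarrow> real.
        (\<forall>i\<in>{1..d+1}. 0 \<le> \<gamma> i \<and> \<gamma> i < 1) \<and>
        real_of_int (z 0) = (\<Sum>i=1..d+1. \<gamma> i) \<and>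
        (\<forall>j\<in>{1..d}. real_of_int (z j) = \<gamma> j + \<gamma> (d+1) * real_of_int (lam j)))"

definition P_lambda :: "nat \<Rightarrow> (nat \<Rightarrow> int) \<Rightarrow> (nat \<Rightarrow> int) set" where
  "P_lambda d lam = {z. in_Pi d lam z}"

definition P_le :: "nat \<Rightarrow> (nat \<Rightarrow> int) \<Rightarrow> (nat \<Rightarrow> int) \<Rightarrow> (nat \<Rightarrow> int) \<Rightarrow> bool" where
  "P_le d lam \<sigma> \<mu> \<longleftrightarrow> \<sigma> \<in> P_lambda d lam \<and> \<mu> \<in> P_lambda d lam \<and>
       (\<lambda>j. \<mu> j - \<sigma> j) \<in> P_lambda d lam"

definition Q_set :: "nat \<Rightarrow> nat \<Rightarrow> (int \<times> int) set" where
  "Q_set x v = {(r,p). 0 \<le> r \<and> r < int x \<and> 0 \<le> p \<and> p < int v}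
                - {(0,0), (int x - 1, int v - 1)}"

definition Q_less :: "int \<times> int \<Rightarrow> int \<times> int \<Rightarrow> bool" where
  "Q_less a b \<longleftrightarrow> snd a > snd b \<and> fst b > fst a"

end

theory Submission
  imports Defs
begin


definition Ccond :: "int \<Rightarrow> int \<Rightarrow> int \<Rightarrow> int \<Rightarrow> bool" where
  "Ccond X V c z0 \<longleftrightarrow> c \<le> z0*X \<and> z0*X \<le> c + V*X - 2 \<and> z0 \<le> V*c \<and> V*c \<le> z0 + V*X - 2"

lemma Ccond_iff:
  fixes X V c z0 :: int
  assumes X: "X \<ge> 1" and V: "V \<ge> 1" and XV: "X*V \<ge> 3"
  shows "Ccond X V c z0 \<longleftrightarrow> (c = 0 \<and> z0 = 0) \<or>
     (1 \<le> c \<and> c \<le> X \<and> 1 \<le> z0 \<and> z0 \<le> V \<and> \<not>(c = 1 \<and> z0 = V) \<and> \<not>(c = X \<and> z0 = 1))"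
proof
  assume C: "Ccond X V c z0"
  hence c1: "c \<le> z0*X" and c2: "z0*X \<le> c + V*X - 2" and c3: "z0 \<le> V*c" and c4: "V*c \<le> z0 + V*X - 2"
    by (auto simp: Ccond_def)
  have vc: "V*c \<le> V*(z0*X)" using c1 V by (simp add: mult_left_mono)
  show "(c = 0 \<and> z0 = 0) \<or>
     (1 \<le> c \<and> c \<le> X \<and> 1 \<le> z0 \<and> z0 \<le> V \<and> \<not>(c = 1 \<and> z0 = V) \<and> \<not>(c = X \<and> z0 = 1))"
  proof (cases "z0 \<le> 0")
    case True
    have "z0 \<ge> 0"
    proof (rule ccontr)
      assume "\<not> z0 \<ge> 0"
      hence "z0 * (X*V) \<le> z0 * 3" using XV by (intro mult_left_mono_neg) auto
      moreover have "V*(z0*X) = z0*(X*V)" by (simp add: algebra_simps)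
      ultimately show False using c3 vc \<open>\<not> z0 \<ge> 0\<close> by linarith
    qed
    hence "z0 = 0" using True by simp
    moreover have "c = 0"
    proof -
      have "c \<le> 0" using c1 \<open>z0 = 0\<close> by simp
      moreover have "0 \<le> V*c" using c3 \<open>z0 = 0\<close> by simp
      hence "0 \<le> c" using V by (simp add: zero_le_mult_iff)
      ultimately show ?thesis by simp
    qed
    ultimately show ?thesis by simp
  next
    case False
    have "0 < V*c" using c3 False by simp
    hence cpos: "c \<ge> 1" using V by (simp add: zero_less_mult_iff)
    have z0V: "z0 \<le> V"
    proof (rule ccontr)
      assume "\<not> z0 \<le> V"
      hence "z0 \<ge> V + 1" by simp
      have "V*(z0*X - V*X + 2) \<le> V*c" using c2 V by (intro mult_left_mono) auto
      hence "z0*(V*X - 1) \<le> V*V*X + V*X - 2*V - 2" using c4 by (simp add: algebra_simps)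
      moreover have "(V+1)*(V*X-1) \<le> z0*(V*X - 1)" using \<open>z0 \<ge> V+1\<close> XV
        by (intro mult_right_mono) (auto simp: mult.commute)
      ultimately show False using V by (simp add: algebra_simps)
    qed
    have cX: "c \<le> X"
    proof (rule ccontr)
      assume "\<not> c \<le> X"
      hence "c \<ge> X + 1" by simp
      have "X*(V*c - V*X + 2) \<le> X*z0" using c4 X by (intro mult_left_mono) auto
      hence "c*(V*X - 1) \<le> V*X*X + V*X - 2*X - 2" using c2 by (simp add: algebra_simps)
      moreover have "(X+1)*(V*X-1) \<le> c*(V*X - 1)" using \<open>c \<ge> X+1\<close> XV
        by (intro mult_right_mono) (auto simp: mult.commute)
      ultimately show False using X by (simp add: algebra_simps)
    qed
    have e1: "\<not>(c = 1 \<and> z0 = V)" using c2 by (auto simp: algebra_simps)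
    have e2: "\<not>(c = X \<and> z0 = 1)" using c4 by (auto simp: algebra_simps)
    show ?thesis using cpos cX z0V False e1 e2 by auto
  qed
next
  assume H: "(c = 0 \<and> z0 = 0) \<or>
     (1 \<le> c \<and> c \<le> X \<and> 1 \<le> z0 \<and> z0 \<le> V \<and> \<not>(c = 1 \<and> z0 = V) \<and> \<not>(c = X \<and> z0 = 1))"
  show "Ccond X V c z0"
  proof (cases "c = 0 \<and> z0 = 0")
    case True thus ?thesis using XV by (simp add: Ccond_def mult.commute)
  next
    case False
    with H have h: "1 \<le> c" "c \<le> X" "1 \<le> z0" "z0 \<le> V" "\<not>(c = 1 \<and> z0 = V)" "\<not>(c = X \<and> z0 = 1)" by auto
    have "1*X \<le> z0*X" using h X by (intro mult_right_mono) auto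
    hence a1: "c \<le> z0*X" using h by linarith
    have "V*1 \<le> V*c" using h V by (intro mult_left_mono) auto
    hence a3: "z0 \<le> V*c" using h by linarith
    have a2: "z0*X \<le> c + V*X - 2"
    proof (cases "z0 = V")
      case True thus ?thesis using h by (simp add: mult.commute)
    next
      case False
      hence "z0 \<le> V - 1" using h by simp
      hence "z0*X \<le> (V-1)*X" using X by (intro mult_right_mono) auto
      thus ?thesis using h XV by (simp add: algebra_simps)
    qed
    have a4: "V*c \<le> z0 + V*X - 2"
    proof (cases "c = X")
      case True thus ?thesis using h by (simp add: mult.commute)
    next
      case False
      hence "c \<le> X - 1" using h by simp
      hence "V*c \<le> V*(X-1)" using V by (intro mult_left_mono) auto
      thus ?thesis using h XV by (simp add: algebra_simps)
    qed
    show ?thesis using a1 a2 a3 a4 by (simp add: Ccond_def)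
  qed
qed


lemma sum_split: "(\<Sum>i=1..v+1. (f::nat\<Rightarrow>real) i) = (\<Sum>i=1..v. f i) + f (v+1)"
  by simp

lemma Pi_iff:
  fixes x v :: nat and z :: "nat \<Rightarrow> int"
  assumes v: "v \<ge> 1" and xv: "x * v \<ge> 2"
  shows "in_Pi v (\<lambda>_. int x) z \<longleftrightarrow> (\<forall>j>v. z j = 0) \<and> (\<forall>j\<in>{1..v}. z j = z 1) \<and>
           Ccond (int x) (int v) (z 1) (z 0)"
proof
  assume "in_Pi v (\<lambda>_. int x) z"
  then obtain \<gamma> :: "nat \<Rightarrow> real" where z0: "\<forall>j>v. z j = 0"
    and gb: "\<forall>i\<in>{1..v+1}. 0 \<le> \<gamma> i \<and> \<gamma> i < 1"
    and s: "real_of_int (z 0) = (\<Sum>i=1..v+1. \<gamma> i)"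
    and zj: "\<forall>j\<in>{1..v}. real_of_int (z j) = \<gamma> j + \<gamma> (v+1) * real x"
    unfolding in_Pi_def by auto
  define g where "g = \<gamma> (v+1)"
  define c where "c = z 1"
  have g0: "0 \<le> g" and g1: "g < 1" using gb by (auto simp: g_def)
  have gj: "0 \<le> \<gamma> j \<and> \<gamma> j < 1" if "j \<in> {1..v}" for j using gb that by auto
  have c_eq: "real_of_int c = \<gamma> 1 + g * real x" using zj v by (auto simp: c_def g_def)
  have eq: "z j = c" if "j \<in> {1..v}" for j
  proof -
    have a: "real_of_int (z j) = \<gamma> j + g * real x" using zj that by (auto simp: g_def)
    have "\<bar>real_of_int (z j - c)\<bar> < 1" using a c_eq gj[OF that] gj[of 1] v by auto
    hence "\<bar>z j - c\<bar> < 1" by linarith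
    thus ?thesis by simp
  qed
  have gam: "\<gamma> j = real_of_int c - g * real x" if "j \<in> {1..v}" for j
    using zj that eq[OF that] by (auto simp: g_def)
  have "(\<Sum>i=1..v. \<gamma> i) = (\<Sum>i=1..v. real_of_int c - g * real x)"
    using gam by (intro sum.cong) auto
  hence z0e: "real_of_int (z 0) = real v * (real_of_int c - g * real x) + g"
    using s by (simp add: g_def)
  define m where "m = int v * c - z 0"
  have mg: "real_of_int m = g * (real x * real v - 1)"
    unfolding m_def using z0e by (simp add: algebra_simps)
  have N: "real x * real v - 1 > 0" using xv
    by (metis of_nat_mult of_nat_le_iff of_nat_numeral diff_gt_0_iff_gt less_le_trans one_less_numeral_iff semiring_norm(76))
  have "real_of_int m \<ge> 0" using mg g0 N by simp
  hence m0: "m \<ge> 0" by simp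
  have "real_of_int m < real x * real v - 1" using mg g1 N by (simp add: mult_less_cancel_right2)
  hence "real_of_int m < real_of_int (int x * int v - 1)" by simp
  hence m1: "m \<le> int x * int v - 2" by linarith
  have c01: "0 \<le> real_of_int c - g * real x" "real_of_int c - g * real x < 1"
    using gj[of 1] v c_eq by auto
  have "real_of_int (z 0 * int x - c) = real_of_int (z 0) * real x - real_of_int c" by simp
  also have "\<dots> = (real v * (real_of_int c - g * real x) + g) * real x - real_of_int c" by (simp only: z0e)
  also have "\<dots> = (real_of_int c - g * real x) * (real x * real v - 1)" by (simp add: algebra_simps)
  finally have key: "real_of_int (z 0 * int x - c) = (real_of_int c - g * real x) * (real x * real v - 1)" .
  have "real_of_int (z 0 * int x - c) \<ge> 0" using key c01 N by simp
  hence k0: "z 0 * int x - c \<ge> 0" by linarith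
  have "real_of_int (z 0 * int x - c) < real x * real v - 1" using key c01 N
    by (simp add: mult_less_cancel_right2)
  hence "real_of_int (z 0 * int x - c) < real_of_int (int x * int v - 1)" by simp
  hence k1: "z 0 * int x - c \<le> int x * int v - 2" by linarith
  have xvc: "int x * int v = int v * int x" by simp
  have "Ccond (int x) (int v) c (z 0)"
    unfolding Ccond_def using m0 m1 k0 k1 xvc unfolding m_def by linarith
  thus "(\<forall>j>v. z j = 0) \<and> (\<forall>j\<in>{1..v}. z j = z 1) \<and> Ccond (int x) (int v) (z 1) (z 0)"
    using z0 eq unfolding c_def by blast
next
  assume H: "(\<forall>j>v. z j = 0) \<and> (\<forall>j\<in>{1..v}. z j = z 1) \<and> Ccond (int x) (int v) (z 1) (z 0)"
  define c where "c = z 1"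
  define m where "m = int v * c - z 0"
  define N where "N = real x * real v - 1"
  have N: "N > 0" using xv unfolding N_def
    by (metis of_nat_mult of_nat_le_iff of_nat_numeral diff_gt_0_iff_gt less_le_trans one_less_numeral_iff semiring_norm(76))
  have C: "c \<le> z 0 * int x" "z 0 * int x \<le> c + int v * int x - 2" "z 0 \<le> int v * c"
    "int v * c \<le> z 0 + int v * int x - 2" using H unfolding Ccond_def c_def by auto
  define g where "g = real_of_int m / N"
  define \<gamma> where "\<gamma> = (\<lambda>i. if i = v+1 then g else real_of_int c - g * real x)"
  have xvc: "int x * int v = int v * int x" by simp
  have m0: "0 \<le> m" and m1: "m \<le> int x * int v - 2" using C xvc unfolding m_def by linarith+
  have "real_of_int m \<le> real_of_int (int x * int v - 2)" using m1 by linarith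
  hence "real_of_int m < N" unfolding N_def by simp
  hence g1: "g < 1" and g0: "0 \<le> g" using N m0 by (auto simp: g_def)
  have key: "real_of_int c - g * real x = real_of_int (z 0 * int x - c) / N"
    using N unfolding g_def m_def N_def by (simp add: field_simps)
  have k0: "0 \<le> z 0 * int x - c" and k1: "z 0 * int x - c \<le> int x * int v - 2" using C xvc by linarith+
  have "real_of_int (z 0 * int x - c) \<le> real_of_int (int x * int v - 2)" using k1 by linarith
  hence lt: "real_of_int (z 0 * int x - c) < N" unfolding N_def by simp
  have r0: "0 \<le> real_of_int (z 0 * int x - c)" using k0 by linarith
  have cg1: "real_of_int c - g * real x < 1" unfolding key using lt N by simp
  have cg0: "0 \<le> real_of_int c - g * real x" unfolding key using r0 N by simp
  have sum: "(\<Sum>i=1..v+1. \<gamma> i) = real v * (real_of_int c - g * real x) + g"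
  proof -
    have "(\<Sum>i=1..v. \<gamma> i) = (\<Sum>i=1..v. real_of_int c - g * real x)"
      by (intro sum.cong) (auto simp: \<gamma>_def)
    thus ?thesis by (simp add: \<gamma>_def)
  qed
  have "real v * (real_of_int c - g * real x) + g = real_of_int (z 0)"
  proof -
    have "g * N = real_of_int m" using N by (simp add: g_def)
    hence "real_of_int (z 0) = real v * real_of_int c - g * N" unfolding m_def by simp
    thus ?thesis unfolding N_def by (simp add: algebra_simps)
  qed
  show "in_Pi v (\<lambda>_. int x) z"
    unfolding in_Pi_def
  proof (intro conjI exI[of _ \<gamma>])
    show "\<forall>j>v. z j = 0" using H by simp
    show "\<forall>i\<in>{1..v + 1}. 0 \<le> \<gamma> i \<and> \<gamma> i < 1" using g0 g1 cg0 cg1 by (auto simp: \<gamma>_def)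
    show "real_of_int (z 0) = (\<Sum>i = 1..v + 1. \<gamma> i)" using sum \<open>_ = real_of_int (z 0)\<close> by simp
    show "\<forall>j\<in>{1..v}. real_of_int (z j) = \<gamma> j + \<gamma> (v + 1) * real_of_int (int x)"
    proof
      fix j assume j: "j \<in> {1..v}"
      hence "z j = c" using H unfolding c_def by blast
      moreover have "\<gamma> j = real_of_int c - g * real x" using j by (simp add: \<gamma>_def)
      ultimately show "real_of_int (z j) = \<gamma> j + \<gamma> (v + 1) * real_of_int (int x)"
        by (simp add: \<gamma>_def)
    qed
  qed
qed

definition good :: "int \<Rightarrow> int \<Rightarrow> int \<Rightarrow> int \<Rightarrow> bool" where
  "good X V c z0 \<longleftrightarrow> 1 \<le> c \<and> c \<le> X \<and> 1 \<le> z0 \<and> z0 \<le> V \<and> \<not>(c = 1 \<and> z0 = V) \<and> \<not>(c = X \<and> z0 = 1)"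

definition struc :: "nat \<Rightarrow> (nat \<Rightarrow> int) \<Rightarrow> bool" where
  "struc v z \<longleftrightarrow> (\<forall>j>v. z j = 0) \<and> (\<forall>j\<in>{1..v}. z j = z 1)"

lemma memA:
  fixes x v :: nat
  assumes "x \<ge> 1" and "v \<ge> 1" and "x * v \<ge> 3"
  shows "z \<in> P_lambda v (\<lambda>_. int x) - {(\<lambda>_. 0)} \<longleftrightarrow> struc v z \<and> good (int x) (int v) (z 1) (z 0)"
proof -
  have xv2: "x * v \<ge> 2" using assms by simp
  have XV: "int x * int v \<ge> 3" using assms(3) by (metis of_nat_mult of_nat_le_iff of_nat_numeral)
  have X: "int x \<ge> 1" and V: "int v \<ge> 1" using assms by auto
  have z0iff: "z = (\<lambda>_. 0) \<longleftrightarrow> z 1 = 0 \<and> z 0 = 0" if "struc v z"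
  proof
    assume "z 1 = 0 \<and> z 0 = 0"
    show "z = (\<lambda>_. 0)"
    proof
      fix j show "z j = 0"
      proof (cases "j = 0")
        case True thus ?thesis using \<open>z 1 = 0 \<and> z 0 = 0\<close> by simp
      next
        case False
        show ?thesis
        proof (cases "j \<le> v")
          case True
          hence "j \<in> {1..v}" using False by simp
          thus ?thesis using that \<open>z 1 = 0 \<and> z 0 = 0\<close> unfolding struc_def by metis
        next
          case False thus ?thesis using that unfolding struc_def by simp
        qed
      qed
    qed
  qed simp
  have pz: "in_Pi v (\<lambda>_. int x) z \<longleftrightarrow> struc v z \<and> Ccond (int x) (int v) (z 1) (z 0)"
    using Pi_iff[OF assms(2) xv2, of z] unfolding struc_def by blast
  have cz: "Ccond (int x) (int v) (z 1) (z 0) \<longleftrightarrow> (z 1 = 0 \<and> z 0 = 0) \<or> good (int x) (int v) (z 1) (z 0)"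
    using Ccond_iff[OF X V XV, of "z 1" "z 0"] unfolding good_def by blast
  have ng: "\<not> good (int x) (int v) 0 0" unfolding good_def by simp
  show ?thesis
    unfolding P_lambda_def mem_Collect_eq Diff_iff singleton_iff pz cz
    using z0iff ng by metis
qed

theorem theorem4p1:
  fixes x v :: nat
  assumes "x \<ge> 1" and "v \<ge> 1" and "x * v \<ge> 3"
  shows "\<exists>f. bij_betw f (P_lambda v (\<lambda>_. int x) - {(\<lambda>_. 0)}) (Q_set x v) \<and>
           (\<forall>\<sigma>\<in>P_lambda v (\<lambda>_. int x) - {(\<lambda>_. 0)}.
            \<forall>\<mu>\<in>P_lambda v (\<lambda>_. int x) - {(\<lambda>_. 0)}.
              P_le v (\<lambda>_. int x) \<sigma> \<mu> \<longleftrightarrow> (f \<sigma> = f \<mu> \<or> Q_less (f \<sigma>) (f \<mu>)))"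
proof -
  define A where "A = P_lambda v (\<lambda>_. int x) - {(\<lambda>_. 0)}"
  define f where "f = (\<lambda>z::nat\<Rightarrow>int. (z 1 - 1, int v - z 0))"
  define h where "h = (\<lambda>(r::int,p::int). (\<lambda>j::nat. if j = 0 then int v - p else if j \<le> v then r + 1 else 0))"
  have xv2: "x * v \<ge> 2" using assms by simp
  have XV: "int x * int v \<ge> 3" using assms(3) by (metis of_nat_mult of_nat_le_iff of_nat_numeral)
  have X: "int x \<ge> 1" and V: "int v \<ge> 1" using assms by auto
  note mA = memA[OF assms, folded A_def]
  have hf: "h (f z) = z" if "z \<in> A" for z
  proof
    fix j
    have st: "struc v z" using mA that by simp
    show "h (f z) j = z j"
    proof (cases "j = 0")
      case True thus ?thesis by (simp add: h_def f_def)
    next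
      case False
      show ?thesis
      proof (cases "j \<le> v")
        case True
        hence "j \<in> {1..v}" using False by simp
        hence "z j = z 1" using st unfolding struc_def by blast
        thus ?thesis using True False by (simp add: h_def f_def)
      next
        case False thus ?thesis using st unfolding struc_def by (simp add: h_def f_def)
      qed
    qed
  qed
  have fh: "f (h b) = b" for b using assms(2) by (cases b) (auto simp: h_def f_def)
  have fA: "f z \<in> Q_set x v" if "z \<in> A" for z
    using mA that unfolding Q_set_def f_def good_def by auto
  have hQ: "h b \<in> A" if "b \<in> Q_set x v" for b
  proof -
    obtain r p where b: "b = (r,p)" by (cases b)
    have "struc v (h b)" unfolding struc_def b h_def by auto
    moreover have "good (int x) (int v) (h b 1) (h b 0)"
      using that assms(2) unfolding b h_def Q_set_def good_def by auto
    ultimately show ?thesis using mA by simp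
  qed
  have bij: "bij_betw f A (Q_set x v)"
    by (rule bij_betw_byWitness[where f'=h]) (use hf fh fA hQ in auto)
  have ord: "P_le v (\<lambda>_. int x) \<sigma> \<mu> \<longleftrightarrow> (f \<sigma> = f \<mu> \<or> Q_less (f \<sigma>) (f \<mu>))"
    if s: "\<sigma> \<in> A" and m: "\<mu> \<in> A" for \<sigma> \<mu>
  proof -
    have ss: "struc v \<sigma>" "good (int x) (int v) (\<sigma> 1) (\<sigma> 0)" using mA s by auto
    have ms: "struc v \<mu>" "good (int x) (int v) (\<mu> 1) (\<mu> 0)" using mA m by auto
    have sP: "\<sigma> \<in> P_lambda v (\<lambda>_. int x)" and mP: "\<mu> \<in> P_lambda v (\<lambda>_. int x)"
      using s m unfolding A_def by auto
    have std: "struc v (\<lambda>j. \<mu> j - \<sigma> j)"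
      unfolding struc_def
    proof (intro conjI ballI allI impI)
      fix j assume "j \<in> {1..v}"
      hence "\<mu> j = \<mu> 1" "\<sigma> j = \<sigma> 1" using ss(1) ms(1) unfolding struc_def by blast+
      thus "\<mu> j - \<sigma> j = \<mu> 1 - \<sigma> 1" by simp
    next
      fix j :: nat assume "j > v"
      hence "\<mu> j = 0" "\<sigma> j = 0" using ss(1) ms(1) unfolding struc_def by blast+
      thus "\<mu> j - \<sigma> j = 0" by simp
    qed
    have pd: "in_Pi v (\<lambda>_. int x) (\<lambda>j. \<mu> j - \<sigma> j) \<longleftrightarrow> Ccond (int x) (int v) (\<mu> 1 - \<sigma> 1) (\<mu> 0 - \<sigma> 0)"
      using Pi_iff[OF assms(2) xv2, of "\<lambda>j. \<mu> j - \<sigma> j"] std unfolding struc_def by blast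
    have "P_le v (\<lambda>_. int x) \<sigma> \<mu> \<longleftrightarrow> Ccond (int x) (int v) (\<mu> 1 - \<sigma> 1) (\<mu> 0 - \<sigma> 0)"
      unfolding P_le_def using sP mP pd unfolding P_lambda_def mem_Collect_eq by blast
    also have "\<dots> \<longleftrightarrow> (\<mu> 1 - \<sigma> 1 = 0 \<and> \<mu> 0 - \<sigma> 0 = 0) \<or>
     (1 \<le> \<mu> 1 - \<sigma> 1 \<and> \<mu> 1 - \<sigma> 1 \<le> int x \<and> 1 \<le> \<mu> 0 - \<sigma> 0 \<and> \<mu> 0 - \<sigma> 0 \<le> int v \<and>
      \<not>(\<mu> 1 - \<sigma> 1 = 1 \<and> \<mu> 0 - \<sigma> 0 = int v) \<and> \<not>(\<mu> 1 - \<sigma> 1 = int x \<and> \<mu> 0 - \<sigma> 0 = 1))"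
      by (rule Ccond_iff[OF X V XV])
    also have "\<dots> \<longleftrightarrow> (f \<sigma> = f \<mu> \<or> Q_less (f \<sigma>) (f \<mu>))"
      using ss(2) ms(2) unfolding good_def f_def Q_less_def by auto
    finally show ?thesis .
  qed
  show ?thesis unfolding A_def[symmetric]
    by (rule exI[of _ f], intro conjI bij ballI ord)
qed

end
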